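(* Let $X$ be a finite discrete space with at least two elements, $\Gamma$ a nonempty countable set, $\varphi:\Gamma\to\Gamma$ any map, and $\sigma_\varphi:X^\Gamma\to X^\Gamma$ the generalized shift. Then each of the following is equivalent to "$\varphi$ has at least one non-quasi-periodic point": $(X^\Gamma,\sigma_\varphi)$ is $\omega^u_u$-chaotic; it is $\omega^u_\infty$-chaotic; it is $\omega^u_2$-chaotic; it is $\omega^\infty_\infty$-chaotic; it is $\omega^\infty_2$-chaotic.
   Context: $X^\Gamma$ carries the product topology (compact metrizable). The generalized shift is $\sigma_\varphi((x_\alpha)_{\alpha\in\Gamma})=(x_{\varphi(\alpha)})_{\alpha\in\Gamma}$. A point $\theta\in\Gamma$ is quasi-periodic for $\varphi$ if $\{\varphi^n(\theta):n\ge0\}$ is finite; otherwise it is non-quasi-periodic. For a continuous $f:Y\to Y$ on a compact metric space, $Per(f)$ is the set of periodic points, and for $a\in Y$, $\omega_f(a)$ is the set of $z\in Y$ such that $z=\lim_k f^{n_k}(a)$ for some strictly increasing sequence $(n_k)$ of natural numbers. Points $x,y$ are $\omega^u$-scrambled (resp. $\omega^\infty$-scrambled) if $\omega_f(x)\setminus\omega_f(y)$ is uncountable (resp. infinite), $\omega_f(x)\cap\omega_f(y)\neq\varnothing$, and $\omega_f(x)\setminus Per(f)\neq\varnothing$. A set with at least two elements is $\omega^u$- (resp. $\omega^\infty$-) scrambled if every pair of distinct points in it is. $f$ is $\omega^u_u$-, $\omega^u_\infty$-, $\omega^u_2$-chaotic if $Y$ has an uncountable, infinite, resp. at least two-element $\omega^u$-scrambled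 set; $f$ is $\omega^\infty_\infty$-, $\omega^\infty_2$-chaotic if $Y$ has an infinite, resp. at least two-element $\omega^\infty$-scrambled set. *)

theory Defs
  imports "HOL-Analysis.Analysis"
begin

definition prod_space :: "'a set \<Rightarrow> 'b set \<Rightarrow> ('b \<Rightarrow> 'a) topology" where
  "prod_space X G = product_topology (\<lambda>_. discrete_topology X) G"

definition gen_shift :: "'b set \<Rightarrow> ('b \<Rightarrow> 'b) \<Rightarrow> ('b \<Rightarrow> 'a) \<Rightarrow> ('b \<Rightarrow> 'a)" where
  "gen_shift G \<phi> x = (\<lambda>\<alpha>\<in>G. x (\<phi> \<alpha>))"

definition quasi_periodic :: "('b \<Rightarrow> 'b) \<Rightarrow> 'b \<Rightarrow> bool" where
  "quasi_periodic \<phi> \<theta> \<longleftrightarrow> finite {(\<phi> ^^ n) \<theta> | n. True}"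

definition periodic_points :: "'c topology \<Rightarrow> ('c \<Rightarrow> 'c) \<Rightarrow> 'c set" where
  "periodic_points T f = {x \<in> topspace T. \<exists>n>0. (f ^^ n) x = x}"

definition omega_limit :: "'c topology \<Rightarrow> ('c \<Rightarrow> 'c) \<Rightarrow> 'c \<Rightarrow> 'c set" where
  "omega_limit T f a = {z \<in> topspace T. \<exists>r. strict_mono r \<and>
      limitin T (\<lambda>k. (f ^^ r k) a) z sequentially}"

definition omega_u_scrambled :: "'c topology \<Rightarrow> ('c \<Rightarrow> 'c) \<Rightarrow> 'c \<Rightarrow> 'c \<Rightarrow> bool" where
  "omega_u_scrambled T f x y \<longleftrightarrow>
     uncountable (omega_limit T f x - omega_limit T f y) \<and>
     omega_limit T f x \<inter> omega_limit T f y \<noteq> {} \<and>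
     omega_limit T f x - periodic_points T f \<noteq> {}"

definition omega_inf_scrambled :: "'c topology \<Rightarrow> ('c \<Rightarrow> 'c) \<Rightarrow> 'c \<Rightarrow> 'c \<Rightarrow> bool" where
  "omega_inf_scrambled T f x y \<longleftrightarrow>
     infinite (omega_limit T f x - omega_limit T f y) \<and>
     omega_limit T f x \<inter> omega_limit T f y \<noteq> {} \<and>
     omega_limit T f x - periodic_points T f \<noteq> {}"

definition scrambled_set ::
  "('c \<Rightarrow> 'c \<Rightarrow> bool) \<Rightarrow> 'c topology \<Rightarrow> 'c set \<Rightarrow> bool" where
  "scrambled_set P T S \<longleftrightarrow> S \<subseteq> topspace T \<and> (\<exists>x\<in>S. \<exists>y\<in>S. x \<noteq> y) \<and>
     (\<forall>x\<in>S. \<forall>y\<in>S. x \<noteq> y \<longrightarrow> P x y)"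

definition omega_u_u_chaotic :: "'c topology \<Rightarrow> ('c \<Rightarrow> 'c) \<Rightarrow> bool" where
  "omega_u_u_chaotic T f \<longleftrightarrow> (\<exists>S. scrambled_set (omega_u_scrambled T f) T S \<and> uncountable S)"

definition omega_u_inf_chaotic :: "'c topology \<Rightarrow> ('c \<Rightarrow> 'c) \<Rightarrow> bool" where
  "omega_u_inf_chaotic T f \<longleftrightarrow> (\<exists>S. scrambled_set (omega_u_scrambled T f) T S \<and> infinite S)"

definition omega_u_2_chaotic :: "'c topology \<Rightarrow> ('c \<Rightarrow> 'c) \<Rightarrow> bool" where
  "omega_u_2_chaotic T f \<longleftrightarrow> (\<exists>S. scrambled_set (omega_u_scrambled T f) T S)"

definition omega_inf_inf_chaotic :: "'c topology \<Rightarrow> ('c \<Rightarrow> 'c) \<Rightarrow> bool" where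
  "omega_inf_inf_chaotic T f \<longleftrightarrow> (\<exists>S. scrambled_set (omega_inf_scrambled T f) T S \<and> infinite S)"

definition omega_inf_2_chaotic :: "'c topology \<Rightarrow> ('c \<Rightarrow> 'c) \<Rightarrow> bool" where
  "omega_inf_2_chaotic T f \<longleftrightarrow> (\<exists>S. scrambled_set (omega_inf_scrambled T f) T S)"

end

theory Submission
  imports Defs "HOL-Library.Discrete_Functions" "HOL-Library.Nat_Bijection"
begin


lemma limitin_discrete:
  "limitin (discrete_topology X) f l F \<longleftrightarrow> l \<in> X \<and> eventually (\<lambda>k. f k = l) F"
proof
  assume H: "limitin (discrete_topology X) f l F"
  hence "l \<in> X" by (simp add: limitin_def)
  moreover have "eventually (\<lambda>k. f k \<in> {l}) F"
    using H `l \<in> X` unfolding limitin_def by auto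
  ultimately show "l \<in> X \<and> eventually (\<lambda>k. f k = l) F" by simp
next
  assume "l \<in> X \<and> eventually (\<lambda>k. f k = l) F"
  thus "limitin (discrete_topology X) f l F" unfolding limitin_def
    by (auto elim: eventually_mono)
qed

lemma topspace_prod_space: "topspace (prod_space X G) = (\<Pi>\<^sub>E i\<in>G. X)"
  by (simp add: prod_space_def)

lemma limitin_prod_space:
  "limitin (prod_space X G) f l F \<longleftrightarrow> l \<in> topspace (prod_space X G) \<and>
     eventually (\<lambda>k. f k \<in> topspace (prod_space X G)) F \<and>
     (\<forall>\<alpha>\<in>G. eventually (\<lambda>k. f k \<alpha> = l \<alpha>) F)"
  unfolding prod_space_def limitin_componentwise limitin_discrete topspace_product_topology
  by (auto simp: PiE_iff)

lemma shift_iter: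
  assumes "\<phi> \<in> G \<rightarrow> G" "\<alpha> \<in> G"
  shows "(gen_shift G \<phi> ^^ n) x \<alpha> = x ((\<phi> ^^ n) \<alpha>)"
  using assms(2)
proof (induction n arbitrary: \<alpha>)
  case 0 thus ?case by simp
next
  case (Suc n)
  have "\<phi> \<alpha> \<in> G" using assms(1) Suc.prems by auto
  have "(gen_shift G \<phi> ^^ Suc n) x \<alpha> = (gen_shift G \<phi> ^^ n) x (\<phi> \<alpha>)"
    using Suc.prems by (simp add: gen_shift_def)
  also have "\<dots> = x ((\<phi> ^^ n) (\<phi> \<alpha>))" using Suc.IH `\<phi> \<alpha> \<in> G` by simp
  also have "\<dots> = x ((\<phi> ^^ Suc n) \<alpha>)" by (simp add: funpow_Suc_right del: funpow.simps)
  finally show ?case .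
qed

lemma shift_top:
  assumes "\<phi> \<in> G \<rightarrow> G" "x \<in> topspace (prod_space X G)"
  shows "(gen_shift G \<phi> ^^ n) x \<in> topspace (prod_space X G)"
  using assms(2)
proof (induction n)
  case 0 thus ?case by simp
next
  case (Suc n)
  thus ?case using assms(1) unfolding topspace_prod_space
    by (auto simp: gen_shift_def PiE_iff extensional_def)
qed

lemma funpow_in: "\<phi> \<in> G \<rightarrow> G \<Longrightarrow> \<alpha> \<in> G \<Longrightarrow> (\<phi> ^^ n) \<alpha> \<in> G"
  by (induction n) auto

lemma omega_iff:
  assumes "\<phi> \<in> G \<rightarrow> G" "y \<in> topspace (prod_space X G)"
  shows "w \<in> omega_limit (prod_space X G) (gen_shift G \<phi>) y \<longleftrightarrow>
    w \<in> topspace (prod_space X G) \<and> (\<exists>r. strict_mono r \<and>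
      (\<forall>\<alpha>\<in>G. eventually (\<lambda>k. y ((\<phi> ^^ r k) \<alpha>) = w \<alpha>) sequentially))"
  unfolding omega_limit_def limitin_prod_space
  using shift_top[OF assms] by (simp add: shift_iter[OF assms(1)]) blast

lemma build_seq:
  fixes P :: "nat \<Rightarrow> nat \<Rightarrow> bool"
  assumes "\<And>k N. \<exists>n\<ge>N. P k n"
  shows "\<exists>r. strict_mono r \<and> (\<forall>k. P k (r k))"
proof -
  define r where "r = rec_nat (SOME n. P 0 n) (\<lambda>k rk. SOME n. n \<ge> Suc rk \<and> P (Suc k) n)"
  have r0: "P 0 (r 0)" unfolding r_def using someI_ex[of "P 0"] assms[of 0 0] by auto
  have rS: "r (Suc k) \<ge> Suc (r k) \<and> P (Suc k) (r (Suc k))" for k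
  proof -
    have "r (Suc k) = (SOME n. n \<ge> Suc (r k) \<and> P (Suc k) n)" unfolding r_def by simp
    thus ?thesis using someI_ex[of "\<lambda>n. n \<ge> Suc (r k) \<and> P (Suc k) n"] assms[of "Suc (r k)" "Suc k"]
      by auto
  qed
  have "strict_mono r" unfolding strict_mono_Suc_iff using rS by (simp add: Suc_le_eq)
  moreover have "P k (r k)" for k using r0 rS by (cases k) auto
  ultimately show ?thesis by blast
qed

lemma omega_windows:
  assumes "\<phi> \<in> G \<rightarrow> G" "y \<in> topspace (prod_space X G)"
    and "w \<in> omega_limit (prod_space X G) (gen_shift G \<phi>) y"
    and "finite F" "F \<subseteq> G"
  shows "\<exists>n\<ge>N. \<forall>\<alpha>\<in>F. y ((\<phi> ^^ n) \<alpha>) = w \<alpha>"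
proof -
  obtain r where r: "strict_mono r" "\<forall>\<alpha>\<in>G. eventually (\<lambda>k. y ((\<phi> ^^ r k) \<alpha>) = w \<alpha>) sequentially"
    using omega_iff[OF assms(1,2)] assms(3) by auto
  have "eventually (\<lambda>k. \<forall>\<alpha>\<in>F. y ((\<phi> ^^ r k) \<alpha>) = w \<alpha>) sequentially"
    using r(2) assms(4,5) by (intro eventually_ball_finite) auto
  moreover have "eventually (\<lambda>k. k \<ge> N) sequentially" by simp
  ultimately have "eventually (\<lambda>k. k \<ge> N \<and> (\<forall>\<alpha>\<in>F. y ((\<phi> ^^ r k) \<alpha>) = w \<alpha>)) sequentially"
    by eventually_elim auto
  then obtain k where "k \<ge> N" "\<forall>\<alpha>\<in>F. y ((\<phi> ^^ r k) \<alpha>) = w \<alpha>"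
    using eventually_sequentially by auto
  moreover have "r k \<ge> k" using r(1) by (simp add: seq_suble)
  ultimately show ?thesis by (intro exI[of _ "r k"]) auto
qed

lemma omega_intro:
  assumes "\<phi> \<in> G \<rightarrow> G" "y \<in> topspace (prod_space X G)" "countable G"
    and "w \<in> topspace (prod_space X G)"
    and W: "\<And>F N. finite F \<Longrightarrow> F \<subseteq> G \<Longrightarrow> \<exists>n\<ge>N. \<forall>\<alpha>\<in>F. y ((\<phi> ^^ n) \<alpha>) = w \<alpha>"
  shows "w \<in> omega_limit (prod_space X G) (gen_shift G \<phi>) y"
proof (cases "G = {}")
  case True
  then have "y = w" using assms(2,4) by (auto simp: topspace_prod_space)
  have "limitin (prod_space X G) (\<lambda>k. (gen_shift G \<phi> ^^ k) y) w sequentially"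
    unfolding limitin_prod_space using True assms(4) shift_top[OF assms(1,2)] by auto
  thus ?thesis unfolding omega_limit_def using assms(4)
    by (intro CollectI conjI exI[of _ "\<lambda>k. k"]) (auto simp: strict_mono_def)
next
  case False
  define g where "g = from_nat_into G"
  have gG: "g i \<in> G" for i using False by (simp add: g_def from_nat_into)
  have "\<exists>n\<ge>N. (\<lambda>k n. \<forall>i\<le>k. y ((\<phi> ^^ n) (g i)) = w (g i)) k n" for k N
    using W[of "g ` {..k}" N] gG by auto
  then obtain r where r: "strict_mono r" "\<forall>k. \<forall>i\<le>k. y ((\<phi> ^^ r k) (g i)) = w (g i)"
    using build_seq[of "\<lambda>k n. \<forall>i\<le>k. y ((\<phi> ^^ n) (g i)) = w (g i)"] by blast
  have "\<forall>\<alpha>\<in>G. eventually (\<lambda>k. y ((\<phi> ^^ r k) \<alpha>) = w \<alpha>) sequentially"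
  proof
    fix \<alpha> assume "\<alpha> \<in> G"
    then obtain i where "g i = \<alpha>" using from_nat_into_surj[OF assms(3)] g_def by metis
    thus "eventually (\<lambda>k. y ((\<phi> ^^ r k) \<alpha>) = w \<alpha>) sequentially"
      using r(2) unfolding eventually_sequentially by blast
  qed
  thus ?thesis using omega_iff[OF assms(1,2)] assms(4) r(1) by blast
qed



lemma mod_arith: "0 < (P::nat) \<Longrightarrow> (m + (n1 + (P - m mod P)) mod P) mod P = n1 mod P"
proof -
  assume "0 < P"
  have "(m + (n1 + (P - m mod P)) mod P) mod P = (m + (n1 + (P - m mod P))) mod P"
    by (simp add: mod_add_right_eq)
  also have "m + (n1 + (P - m mod P)) = n1 + P * (m div P + 1)"
  proof -
    have "m mod P < P" using `0 < P` by simp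
    moreover have "m = P * (m div P) + m mod P" by simp
    moreover have "P * (m div P + 1) = P * (m div P) + P" by simp
    ultimately show ?thesis by linarith
  qed
  also have "(n1 + P * (m div P + 1)) mod P = n1 mod P" by (rule mod_mult_self2)
  finally show ?thesis .
qed

lemma periodic_iter:
  fixes u :: "nat \<Rightarrow> 'c" and t P n :: nat
  assumes "\<forall>n\<ge>t. u (n + P) = u n" "n \<ge> t"
  shows "u (n + l * P) = u n"
proof (induction l)
  case 0 thus ?case by simp
next
  case (Suc l)
  have "u (n + Suc l * P) = u ((n + l * P) + P)" by (simp add: algebra_simps)
  also have "\<dots> = u (n + l * P)"
  proof -
    have "n + l * P \<ge> t" using assms(2) by simp
    thus ?thesis using assms(1) by blast
  qed
  finally show ?case using Suc by simp
qed

lemma periodic_mod: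
  fixes u :: "nat \<Rightarrow> 'c" and t P n n' :: nat
  assumes A: "\<forall>n\<ge>t. u (n + P) = u n" and "n \<ge> t" "n' \<ge> t" "n mod P = n' mod P"
  shows "u n = u n'"
proof -
  have *: "u a = u b" if ab: "a \<ge> t" "a \<le> b" "a mod P = b mod P" for a b
  proof -
    have "b mod P = a mod P" using ab(3) by simp
    hence "P dvd b - a" using mod_eq_dvd_iff_nat[OF ab(2)] by blast
    then obtain l where l: "b - a = P * l" by (elim dvdE)
    hence "b = a + l * P" using ab(2) by (simp add: mult.commute)
    thus ?thesis using periodic_iter[OF A ab(1), of l] by (simp only:)
  qed
  show ?thesis
  proof (cases "n \<le> n'")
    case True thus ?thesis using *[of n n'] assms(2,4) by blast
  next
    case False
    hence "n' \<le> n" by simp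
    thus ?thesis using *[of n' n] assms(3,4) by metis
  qed
qed

lemma qp_period:
  assumes "quasi_periodic \<phi> \<alpha>"
  shows "\<exists>t P. P > 0 \<and> (\<forall>n\<ge>t. (\<phi> ^^ (n + P)) \<alpha> = (\<phi> ^^ n) \<alpha>)"
proof -
  have "finite (range (\<lambda>n. (\<phi> ^^ n) \<alpha>))"
    using assms unfolding quasi_periodic_def by (simp add: full_SetCompr_eq)
  hence "\<not> inj (\<lambda>n. (\<phi> ^^ n) \<alpha>)" using finite_imageD by blast
  then obtain m n where mn: "m \<noteq> n" "(\<phi> ^^ m) \<alpha> = (\<phi> ^^ n) \<alpha>" unfolding inj_def by blast
  have "\<exists>m n. m < n \<and> (\<phi> ^^ m) \<alpha> = (\<phi> ^^ n) \<alpha>"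
  proof (cases "m < n")
    case True thus ?thesis using mn by blast
  next
    case False hence "n < m" using mn(1) by simp
    thus ?thesis using mn(2) by (intro exI[of _ n] exI[of _ m]) simp
  qed
  then obtain m n where mn: "m < n" "(\<phi> ^^ m) \<alpha> = (\<phi> ^^ n) \<alpha>" by blast
  have "(\<phi> ^^ (k + (n - m))) \<alpha> = (\<phi> ^^ k) \<alpha>" if "k \<ge> m" for k
  proof -
    have e1: "k + (n - m) = (k - m) + n" using that mn(1) by simp
    have e2: "k = (k - m) + m" using that by simp
    have "(\<phi> ^^ (k + (n - m))) \<alpha> = (\<phi> ^^ (k - m)) ((\<phi> ^^ n) \<alpha>)"
      unfolding e1 funpow_add by simp
    also have "\<dots> = (\<phi> ^^ (k - m)) ((\<phi> ^^ m) \<alpha>)" using mn(2) by simp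
    also have "\<dots> = (\<phi> ^^ ((k - m) + m)) \<alpha>" unfolding funpow_add by simp
    also have "\<dots> = (\<phi> ^^ k) \<alpha>" using e2 by simp
    finally show ?thesis .
  qed
  thus ?thesis using mn(1) by (intro exI[of _ m] exI[of _ "n - m"]) auto
qed

lemma common_period:
  fixes u :: "'c \<Rightarrow> nat \<Rightarrow> 'd"
  assumes "finite F" "\<forall>\<alpha>\<in>F. \<exists>t P. P > 0 \<and> (\<forall>n\<ge>t. u \<alpha> (n + P) = u \<alpha> n)"
  shows "\<exists>t P. P > 0 \<and> (\<forall>\<alpha>\<in>F. \<forall>n\<ge>t. u \<alpha> (n + P) = u \<alpha> n)"
  using assms
proof (induction F rule: finite_induct)
  case empty thus ?case by (intro exI[of _ 0] exI[of _ 1]) auto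
next
  case (insert \<beta> F)
  obtain t1 P1 where 1: "P1 > 0" "\<forall>\<alpha>\<in>F. \<forall>n\<ge>t1. u \<alpha> (n + P1) = u \<alpha> n"
    using insert by auto
  obtain t2 P2 where 2: "P2 > 0" "\<forall>n\<ge>t2. u \<beta> (n + P2) = u \<beta> n"
    using insert by auto
  have "\<forall>\<alpha>\<in>insert \<beta> F. \<forall>n\<ge>max t1 t2. u \<alpha> (n + P1 * P2) = u \<alpha> n"
  proof (intro ballI allI impI)
    fix \<alpha> n assume "\<alpha> \<in> insert \<beta> F" "max t1 t2 \<le> n"
    show "u \<alpha> (n + P1 * P2) = u \<alpha> n"
    proof (cases "\<alpha> = \<beta>")
      case True
      thus ?thesis using periodic_iter[of t2 "u \<beta>" P2 n P1] 2 `max t1 t2 \<le> n` by simp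
    next
      case False
      hence "\<alpha> \<in> F" using `\<alpha> \<in> insert \<beta> F` by simp
      thus ?thesis using periodic_iter[of t1 "u \<alpha>" P1 n P2] 1 `max t1 t2 \<le> n`
        by (simp add: mult.commute)
    qed
  qed
  thus ?case using 1 2 by (intro exI[of _ "max t1 t2"] exI[of _ "P1 * P2"]) auto
qed

lemma omega_absorb:
  assumes phi: "\<phi> \<in> G \<rightarrow> G" and qp: "\<forall>\<alpha>\<in>G. quasi_periodic \<phi> \<alpha>" and "countable G"
    and x: "x \<in> topspace (prod_space X G)" and y: "y \<in> topspace (prod_space X G)"
    and zx: "z \<in> omega_limit (prod_space X G) (gen_shift G \<phi>) x"
    and zy: "z \<in> omega_limit (prod_space X G) (gen_shift G \<phi>) y"
    and wx: "w \<in> omega_limit (prod_space X G) (gen_shift G \<phi>) x"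
  shows "w \<in> omega_limit (prod_space X G) (gen_shift G \<phi>) y"
proof (rule omega_intro[OF phi y `countable G`])
  show "w \<in> topspace (prod_space X G)" using wx unfolding omega_limit_def by auto
  fix F N assume F: "finite F" "F \<subseteq> G"
  obtain t P where tP: "P > 0" "\<forall>\<alpha>\<in>F. \<forall>n\<ge>t. (\<phi> ^^ (n + P)) \<alpha> = (\<phi> ^^ n) \<alpha>"
  proof -
    have "\<forall>\<alpha>\<in>F. \<exists>t P. P > 0 \<and> (\<forall>n\<ge>t. (\<phi> ^^ (n + P)) \<alpha> = (\<phi> ^^ n) \<alpha>)"
    proof
      fix \<alpha> assume "\<alpha> \<in> F"
      hence "quasi_periodic \<phi> \<alpha>" using F(2) qp by blast
      thus "\<exists>t P. P > 0 \<and> (\<forall>n\<ge>t. (\<phi> ^^ (n + P)) \<alpha> = (\<phi> ^^ n) \<alpha>)"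
        by (rule qp_period)
    qed
    from common_period[OF F(1) this] obtain t P where
      "P > 0" "\<forall>\<alpha>\<in>F. \<forall>n\<ge>t. (\<phi> ^^ (n + P)) \<alpha> = (\<phi> ^^ n) \<alpha>" by blast
    thus ?thesis by (rule that)
  qed
  define F2 where "F2 = (\<lambda>(\<alpha>, j). (\<phi> ^^ j) \<alpha>) ` (F \<times> {..<P})"
  have F2a: "finite F2" using F(1) unfolding F2_def by simp
  have F2b: "F2 \<subseteq> G" using F(2) funpow_in[OF phi] unfolding F2_def by auto
  note F2 = F2a F2b
  obtain n1 where n1: "n1 \<ge> t" "\<forall>\<alpha>\<in>F. x ((\<phi> ^^ n1) \<alpha>) = w \<alpha>"
    using omega_windows[OF phi x wx F] by blast
  obtain m where m: "m \<ge> t" "\<forall>\<beta>\<in>F2. x ((\<phi> ^^ m) \<beta>) = z \<beta>"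
    using omega_windows[OF phi x zx F2] by blast
  obtain m' where m': "m' \<ge> t" "\<forall>\<beta>\<in>F2. y ((\<phi> ^^ m') \<beta>) = z \<beta>"
    using omega_windows[OF phi y zy F2] by blast
  define j where "j = (n1 + (P - m mod P)) mod P"
  have jP: "j < P" using tP(1) by (simp add: j_def)
  have jmod: "(m + j) mod P = n1 mod P" using mod_arith[OF tP(1)] by (simp add: j_def)
  show "\<exists>n\<ge>N. \<forall>\<alpha>\<in>F. y ((\<phi> ^^ n) \<alpha>) = w \<alpha>"
  proof (intro exI[of _ "m' + j + N * P"] conjI ballI)
    have "N * 1 \<le> N * P" using tP(1) by (intro mult_le_mono2) simp
    thus "N \<le> m' + j + N * P" by (simp only: mult_1_right)
    fix \<alpha> assume "\<alpha> \<in> F"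
    have inF2: "(\<phi> ^^ j) \<alpha> \<in> F2" using `\<alpha> \<in> F` jP unfolding F2_def
      by (intro image_eqI[of _ _ "(\<alpha>, j)"]) auto
    have per: "\<forall>n\<ge>t. (\<lambda>n. (\<phi> ^^ n) \<alpha>) (n + P) = (\<lambda>n. (\<phi> ^^ n) \<alpha>) n"
      using tP(2) `\<alpha> \<in> F` by blast
    have "y ((\<phi> ^^ (m' + j + N * P)) \<alpha>) = y ((\<phi> ^^ (m' + j)) \<alpha>)"
      using periodic_iter[OF per, of "m' + j" N] m'(1) by simp
    also have "\<dots> = y ((\<phi> ^^ m') ((\<phi> ^^ j) \<alpha>))" by (simp add: funpow_add)
    also have "\<dots> = z ((\<phi> ^^ j) \<alpha>)" using m'(2) inF2 by simp
    also have "\<dots> = x ((\<phi> ^^ m) ((\<phi> ^^ j) \<alpha>))" using m(2) inF2 by simp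
    also have "\<dots> = x ((\<phi> ^^ (m + j)) \<alpha>)" by (simp add: funpow_add)
    also have "\<dots> = x ((\<phi> ^^ n1) \<alpha>)"
      using periodic_mod[OF per, of "m + j" n1] m(1) n1(1) jmod by simp
    also have "\<dots> = w \<alpha>" using n1(2) `\<alpha> \<in> F` by simp
    finally show "y ((\<phi> ^^ (m' + j + N * P)) \<alpha>) = w \<alpha>" .
  qed
qed



lemma orbit_inj:
  assumes "\<not> quasi_periodic \<phi> \<theta>"
  shows "inj (\<lambda>n. (\<phi> ^^ n) \<theta>)"
proof (rule ccontr)
  assume "\<not> inj (\<lambda>n. (\<phi> ^^ n) \<theta>)"
  then obtain m n where mn0: "m \<noteq> n" "(\<phi> ^^ m) \<theta> = (\<phi> ^^ n) \<theta>" unfolding inj_def by blast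
  have "\<exists>m n. m < n \<and> (\<phi> ^^ m) \<theta> = (\<phi> ^^ n) \<theta>"
  proof (cases "m < n")
    case True thus ?thesis using mn0 by blast
  next
    case False hence "n < m" using mn0(1) by simp
    thus ?thesis using mn0(2) by (intro exI[of _ n] exI[of _ m]) simp
  qed
  then obtain m n where mn: "m < n" "(\<phi> ^^ m) \<theta> = (\<phi> ^^ n) \<theta>" by blast
  have "(\<phi> ^^ k) \<theta> \<in> (\<lambda>k. (\<phi> ^^ k) \<theta>) ` {..<n}" for k
  proof (induction k rule: less_induct)
    case (less k)
    show ?case
    proof (cases "k < n")
      case True thus ?thesis by simp
    next
      case False
      have e1: "k = (k - n) + n" using False by simp
      have "(\<phi> ^^ k) \<theta> = (\<phi> ^^ (k - n)) ((\<phi> ^^ n) \<theta>)"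
        by (subst e1, simp only: funpow_add comp_apply)
      also have "\<dots> = (\<phi> ^^ (k - n)) ((\<phi> ^^ m) \<theta>)" using mn(2) by simp
      also have "\<dots> = (\<phi> ^^ (k - n + m)) \<theta>" by (simp only: funpow_add comp_apply)
      finally have "(\<phi> ^^ k) \<theta> = (\<phi> ^^ (k - n + m)) \<theta>" .
      moreover have "k - n + m < k" using False mn(1) by simp
      ultimately show ?thesis using less.IH by metis
    qed
  qed
  hence "{(\<phi> ^^ n) \<theta> | n. True} \<subseteq> (\<lambda>k. (\<phi> ^^ k) \<theta>) ` {..<n}" by blast
  hence "finite {(\<phi> ^^ n) \<theta> | n. True}" using finite_subset by blast
  thus False using assms unfolding quasi_periodic_def by blast
qed

definition inB :: "('b \<Rightarrow> 'b) \<Rightarrow> 'b \<Rightarrow> 'b \<Rightarrow> bool" where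
  "inB \<phi> \<theta> \<alpha> \<longleftrightarrow> (\<exists>k m. (\<phi> ^^ k) \<alpha> = (\<phi> ^^ m) \<theta>)"

definition hgt :: "('b \<Rightarrow> 'b) \<Rightarrow> 'b \<Rightarrow> 'b \<Rightarrow> int" where
  "hgt \<phi> \<theta> \<alpha> = (SOME z. \<exists>k m. (\<phi> ^^ k) \<alpha> = (\<phi> ^^ m) \<theta> \<and> z = int m - int k)"

definition Emb :: "'b set \<Rightarrow> ('b \<Rightarrow> 'b) \<Rightarrow> 'b \<Rightarrow> 'a \<Rightarrow> (int \<Rightarrow> 'a) \<Rightarrow> 'b \<Rightarrow> 'a" where
  "Emb G \<phi> \<theta> a s = (\<lambda>\<alpha>\<in>G. if inB \<phi> \<theta> \<alpha> then s (hgt \<phi> \<theta> \<alpha>) else a)"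

lemma funpow_comm: "(f ^^ k) ((f ^^ n) x) = (f ^^ n) ((f ^^ k) x)"
  by (metis comp_apply funpow_add add.commute)

lemma hgt_unique:
  fixes \<phi> :: "'b \<Rightarrow> 'b"
  assumes inj: "inj (\<lambda>n. (\<phi> ^^ n) \<theta>)"
    and "(\<phi> ^^ k) \<alpha> = (\<phi> ^^ m) \<theta>" "(\<phi> ^^ k') \<alpha> = (\<phi> ^^ m') \<theta>" "k \<le> k'"
  shows "int m - int k = int m' - int k'"
proof -
  have e: "k' = (k' - k) + k" using assms(4) by simp
  have "(\<phi> ^^ m') \<theta> = (\<phi> ^^ (k' - k)) ((\<phi> ^^ k) \<alpha>)"
    using assms(3) by (subst (asm) e, simp only: funpow_add comp_apply)
  also have "\<dots> = (\<phi> ^^ (k' - k + m)) \<theta>" using assms(2) by (simp only: funpow_add comp_apply)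
  finally have "m' = k' - k + m" using inj unfolding inj_def by blast
  thus ?thesis using assms(4) by simp
qed

lemma hgt_eq:
  fixes \<phi> :: "'b \<Rightarrow> 'b"
  assumes inj: "inj (\<lambda>n. (\<phi> ^^ n) \<theta>)" and "(\<phi> ^^ k) \<alpha> = (\<phi> ^^ m) \<theta>"
  shows "hgt \<phi> \<theta> \<alpha> = int m - int k"
proof -
  have ex: "\<exists>z. \<exists>k m. (\<phi> ^^ k) \<alpha> = (\<phi> ^^ m) \<theta> \<and> z = int m - int k"
    using assms(2) by blast
  obtain k' m' where km: "(\<phi> ^^ k') \<alpha> = (\<phi> ^^ m') \<theta>" "hgt \<phi> \<theta> \<alpha> = int m' - int k'"
    using someI_ex[OF ex] unfolding hgt_def by blast
  show ?thesis
  proof (cases "k \<le> k'")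
    case True thus ?thesis using hgt_unique[OF inj assms(2) km(1)] km(2) by simp
  next
    case False thus ?thesis using hgt_unique[OF inj km(1) assms(2)] km(2) by simp
  qed
qed

lemma inB_iter:
  assumes inj: "inj (\<lambda>n. (\<phi> ^^ n) \<theta>)"
  shows "inB \<phi> \<theta> ((\<phi> ^^ n) \<alpha>) \<longleftrightarrow> inB \<phi> \<theta> \<alpha>"
    and "inB \<phi> \<theta> \<alpha> \<Longrightarrow> hgt \<phi> \<theta> ((\<phi> ^^ n) \<alpha>) = hgt \<phi> \<theta> \<alpha> + int n"
proof -
  show "inB \<phi> \<theta> ((\<phi> ^^ n) \<alpha>) \<longleftrightarrow> inB \<phi> \<theta> \<alpha>"
  proof
    assume "inB \<phi> \<theta> ((\<phi> ^^ n) \<alpha>)"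
    then obtain k m where "(\<phi> ^^ k) ((\<phi> ^^ n) \<alpha>) = (\<phi> ^^ m) \<theta>" unfolding inB_def by blast
    hence "(\<phi> ^^ (k + n)) \<alpha> = (\<phi> ^^ m) \<theta>" by (simp only: funpow_add comp_apply)
    thus "inB \<phi> \<theta> \<alpha>" unfolding inB_def by blast
  next
    assume "inB \<phi> \<theta> \<alpha>"
    then obtain k m where "(\<phi> ^^ k) \<alpha> = (\<phi> ^^ m) \<theta>" unfolding inB_def by blast
    hence "(\<phi> ^^ k) ((\<phi> ^^ n) \<alpha>) = (\<phi> ^^ (n + m)) \<theta>"
      by (simp only: funpow_comm[where f=\<phi> and k=k and n=n] funpow_add comp_apply)
    thus "inB \<phi> \<theta> ((\<phi> ^^ n) \<alpha>)" unfolding inB_def by blast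
  qed
  assume "inB \<phi> \<theta> \<alpha>"
  then obtain k m where km: "(\<phi> ^^ k) \<alpha> = (\<phi> ^^ m) \<theta>" unfolding inB_def by blast
  hence "(\<phi> ^^ k) ((\<phi> ^^ n) \<alpha>) = (\<phi> ^^ (n + m)) \<theta>"
    by (simp only: funpow_comm[where f=\<phi> and k=k and n=n] funpow_add comp_apply)
  thus "hgt \<phi> \<theta> ((\<phi> ^^ n) \<alpha>) = hgt \<phi> \<theta> \<alpha> + int n"
    using hgt_eq[OF inj] km by simp
qed

lemma inB_orbit:
  assumes inj: "inj (\<lambda>n. (\<phi> ^^ n) \<theta>)"
  shows "inB \<phi> \<theta> ((\<phi> ^^ p) \<theta>)" "hgt \<phi> \<theta> ((\<phi> ^^ p) \<theta>) = int p"
proof -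
  have "(\<phi> ^^ 0) ((\<phi> ^^ p) \<theta>) = (\<phi> ^^ p) \<theta>" by simp
  thus "inB \<phi> \<theta> ((\<phi> ^^ p) \<theta>)" unfolding inB_def by blast
  show "hgt \<phi> \<theta> ((\<phi> ^^ p) \<theta>) = int p" using hgt_eq[OF inj, of 0] by simp
qed

lemma Emb_top:
  assumes "a \<in> X" "\<And>z. s z \<in> X"
  shows "Emb G \<phi> \<theta> a s \<in> topspace (prod_space X G)"
  using assms unfolding topspace_prod_space Emb_def by auto

lemma Emb_at: "\<alpha> \<in> G \<Longrightarrow> Emb G \<phi> \<theta> a s \<alpha> = (if inB \<phi> \<theta> \<alpha> then s (hgt \<phi> \<theta> \<alpha>) else a)"
  unfolding Emb_def by simp

lemma Emb_iter:
  assumes inj: "inj (\<lambda>n. (\<phi> ^^ n) \<theta>)" and phi: "\<phi> \<in> G \<rightarrow> G" and "\<alpha> \<in> G"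
  shows "Emb G \<phi> \<theta> a s ((\<phi> ^^ n) \<alpha>) =
     (if inB \<phi> \<theta> \<alpha> then s (hgt \<phi> \<theta> \<alpha> + int n) else a)"
  using funpow_in[OF phi assms(3)] inB_iter[OF inj] unfolding Emb_def by auto

lemma Emb_lower:
  assumes inj: "inj (\<lambda>n. (\<phi> ^^ n) \<theta>)" and phi: "\<phi> \<in> G \<rightarrow> G" and "countable G"
    and X: "a \<in> X" "\<And>z. s z \<in> X" "\<And>z. t z \<in> X"
    and W: "\<And>j N. \<exists>n\<ge>N. \<forall>z. \<bar>z\<bar> \<le> int j \<longrightarrow> s (z + int n) = t z"
  shows "Emb G \<phi> \<theta> a t \<in> omega_limit (prod_space X G) (gen_shift G \<phi>) (Emb G \<phi> \<theta> a s)"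
proof (rule omega_intro[OF phi Emb_top[OF X(1,2)] `countable G` Emb_top[OF X(1,3)]])
  fix F N assume F: "finite F" "F \<subseteq> G"
  define j where "j = (\<Sum>\<alpha>\<in>F. nat \<bar>hgt \<phi> \<theta> \<alpha>\<bar>)"
  obtain n where n: "n \<ge> N" "\<forall>z. \<bar>z\<bar> \<le> int j \<longrightarrow> s (z + int n) = t z" using W by blast
  show "\<exists>n\<ge>N. \<forall>\<alpha>\<in>F. Emb G \<phi> \<theta> a s ((\<phi> ^^ n) \<alpha>) = Emb G \<phi> \<theta> a t \<alpha>"
  proof (intro exI[of _ n] conjI ballI)
    show "N \<le> n" using n by simp
    fix \<alpha> assume "\<alpha> \<in> F"
    hence "\<alpha> \<in> G" using F by blast
    have "nat \<bar>hgt \<phi> \<theta> \<alpha>\<bar> \<le> j" unfolding j_def using F(1) `\<alpha> \<in> F` by (intro member_le_sum) auto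
    hence "\<bar>hgt \<phi> \<theta> \<alpha>\<bar> \<le> int j" by simp
    thus "Emb G \<phi> \<theta> a s ((\<phi> ^^ n) \<alpha>) = Emb G \<phi> \<theta> a t \<alpha>"
      unfolding Emb_iter[OF inj phi `\<alpha> \<in> G`] Emb_at[OF `\<alpha> \<in> G`] using n(2) by simp
  qed
qed

lemma Emb_upper:
  assumes inj: "inj (\<lambda>n. (\<phi> ^^ n) \<theta>)" and phi: "\<phi> \<in> G \<rightarrow> G" and "\<theta> \<in> G"
    and X: "a \<in> X" "\<And>z. s z \<in> X"
    and om: "Emb G \<phi> \<theta> a t \<in> omega_limit (prod_space X G) (gen_shift G \<phi>) (Emb G \<phi> \<theta> a s)"
  shows "\<exists>n\<ge>N. \<forall>p<L. s (int p + int n) = t (int p)"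
proof -
  have F: "finite ((\<lambda>p. (\<phi> ^^ p) \<theta>) ` {..<L})" "(\<lambda>p. (\<phi> ^^ p) \<theta>) ` {..<L} \<subseteq> G"
    using funpow_in[OF phi `\<theta> \<in> G`] by auto
  obtain n where n: "n \<ge> N" "\<forall>\<alpha>\<in>(\<lambda>p. (\<phi> ^^ p) \<theta>) ` {..<L}.
      Emb G \<phi> \<theta> a s ((\<phi> ^^ n) \<alpha>) = Emb G \<phi> \<theta> a t \<alpha>"
    using omega_windows[OF phi Emb_top[OF X] om F] by blast
  have "s (int p + int n) = t (int p)" if "p < L" for p
  proof -
    have G: "(\<phi> ^^ p) \<theta> \<in> G" using funpow_in[OF phi `\<theta> \<in> G`] .
    have "Emb G \<phi> \<theta> a s ((\<phi> ^^ n) ((\<phi> ^^ p) \<theta>)) = Emb G \<phi> \<theta> a t ((\<phi> ^^ p) \<theta>)"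
      using n(2) that by simp
    thus ?thesis unfolding Emb_iter[OF inj phi G] Emb_at[OF G] using inB_orbit[OF inj] by simp
  qed
  thus ?thesis using n(1) by blast
qed

lemma Emb_periodic:
  assumes inj: "inj (\<lambda>n. (\<phi> ^^ n) \<theta>)" and phi: "\<phi> \<in> G \<rightarrow> G" and "\<theta> \<in> G"
    and per: "Emb G \<phi> \<theta> a t \<in> periodic_points (prod_space X G) (gen_shift G \<phi>)"
  shows "\<exists>P>0. \<forall>p. t (int p + int P) = t (int p)"
proof -
  obtain P where P: "P > 0" "(gen_shift G \<phi> ^^ P) (Emb G \<phi> \<theta> a t) = Emb G \<phi> \<theta> a t"
    using per unfolding periodic_points_def by blast
  have "t (int p + int P) = t (int p)" for p
  proof -
    have G: "(\<phi> ^^ p) \<theta> \<in> G" using funpow_in[OF phi `\<theta> \<in> G`] .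
    have "(gen_shift G \<phi> ^^ P) (Emb G \<phi> \<theta> a t) ((\<phi> ^^ p) \<theta>) = Emb G \<phi> \<theta> a t ((\<phi> ^^ p) \<theta>)"
      using P(2) by simp
    thus ?thesis unfolding shift_iter[OF phi G] Emb_iter[OF inj phi G] Emb_at[OF G]
      using inB_orbit[OF inj] by simp
  qed
  thus ?thesis using P(1) by blast
qed



lemma divmod_lin: "r < (c::nat) \<Longrightarrow> (q * c + r) div c = q \<and> (q * c + r) mod c = r"
  by simp

definition tp :: "nat \<Rightarrow> (nat \<Rightarrow> bool) \<Rightarrow> nat \<Rightarrow> bool" where
  "tp i d v \<longleftrightarrow> d (v div (i + 2)) \<and> v mod (i + 2) < i + 1"

definition tb :: "nat \<Rightarrow> (nat \<Rightarrow> bool) \<Rightarrow> int \<Rightarrow> bool" where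
  "tb i d z \<longleftrightarrow> z \<ge> 1 \<and> tp i d (nat (z - 1))"

definition sl_i :: "nat \<Rightarrow> nat" where "sl_i k = fst (prod_decode (fst (prod_decode k)))"
definition sl_m :: "nat \<Rightarrow> nat" where "sl_m k = snd (prod_decode (fst (prod_decode k)))"
definition sl_d :: "(nat \<Rightarrow> bool) \<Rightarrow> nat \<Rightarrow> nat \<Rightarrow> bool" where
  "sl_d M k q \<longleftrightarrow> M (sl_i k) \<and> q \<in> set_decode (sl_m k) \<and> q < k div (sl_i k + 2)"

definition wb :: "(nat \<Rightarrow> bool) \<Rightarrow> nat \<Rightarrow> bool" where
  "wb M n = tb (sl_i (floor_sqrt n)) (sl_d M (floor_sqrt n))
      (int n - int (floor_sqrt n * floor_sqrt n) - int (floor_sqrt n))"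

definition sb :: "(nat \<Rightarrow> bool) \<Rightarrow> int \<Rightarrow> bool" where
  "sb M z \<longleftrightarrow> z \<ge> 0 \<and> wb M (nat z)"

lemma slot_sqrt: "k * k \<le> n \<Longrightarrow> n \<le> k * k + 2 * k \<Longrightarrow> floor_sqrt n = k"
  by (rule floor_sqrt_unique) (auto simp: power2_eq_square)

lemma sb_slot:
  assumes "int (k * k) \<le> x" "x \<le> int (k * k + 2 * k)"
  shows "sb M x = tb (sl_i k) (sl_d M k) (x - int (k * k) - int k)"
proof -
  have x0: "x \<ge> 0" using assms(1) by linarith
  have "k * k \<le> nat x" "nat x \<le> k * k + 2 * k" using assms by linarith+
  hence "floor_sqrt (nat x) = k" by (rule slot_sqrt)
  thus ?thesis using x0 unfolding sb_def wb_def by simp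
qed

lemma tb_marker:
  assumes "d 0"
  shows "\<not> tb i d 0" "1 \<le> p \<Longrightarrow> p \<le> i + 1 \<Longrightarrow> tb i d (int p)" "\<not> tb i d (int i + 2)"
proof -
  show "\<not> tb i d 0" by (simp add: tb_def)
  assume "1 \<le> p" "p \<le> i + 1"
  hence "nat (int p - 1) = p - 1" "p - 1 < i + 2" by auto
  thus "tb i d (int p)" using assms `1 \<le> p` `p \<le> i + 1` by (simp add: tb_def tp_def)
next
  have "nat (int i + 2 - 1) = i + 1" by simp
  thus "\<not> tb i d (int i + 2)" by (simp add: tb_def tp_def)
qed

lemma tb_block: "tb i d (1 + int (q * (i + 2))) = d q"
proof -
  have "nat (1 + int (q * (i + 2)) - 1) = q * (i + 2) + 0"
    by (simp only: add_diff_cancel_left' nat_int add_0_right)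
  thus ?thesis unfolding tb_def tp_def using divmod_lin[of 0 "i+2" q] by simp
qed

lemma windows_pattern:
  assumes "M i"
  shows "\<exists>n\<ge>N. \<forall>z. \<bar>z\<bar> \<le> int j \<longrightarrow> sb M (z + int n) = tb i d z"
proof -
  define A where "A = {q. q \<le> j \<and> d q}"
  have finA: "finite A" unfolding A_def by (rule finite_subset[of _ "{..j}"]) auto
  define m where "m = set_encode A"
  define r where "r = N + j + i + 2"
  define k where "k = prod_encode (prod_encode (i, m), r)"
  have kr: "k \<ge> r" unfolding k_def by (rule le_prod_encode_2)
  have ik: "sl_i k = i" and mk: "sl_m k = m" unfolding sl_i_def sl_m_def k_def by simp_all
  have dm: "set_decode m = A" unfolding m_def using finA by simp
  define n where "n = k * k + k"
  have "sb M (z + int n) = tb i d z" if z: "\<bar>z\<bar> \<le> int j" for z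
  proof -
    have jk: "j \<le> k" using kr unfolding r_def by simp
    have "int (k * k) \<le> z + int n" "z + int n \<le> int (k * k + 2 * k)"
      using z jk unfolding n_def by auto
    hence "sb M (z + int n) = tb i (sl_d M k) z"
      using sb_slot[of k "z + int n" M] ik unfolding n_def by simp
    also have "\<dots> = tb i d z"
    proof (cases "z \<ge> 1")
      case False thus ?thesis by (simp add: tb_def)
    next
      case True
      define v where "v = nat (z - 1)"
      have vj: "v < j" using z True unfolding v_def by linarith
      define q where "q = v div (i + 2)"
      have qv: "q \<le> v" unfolding q_def by simp
      have "(v + (i + 2)) div (i + 2) = v div (i + 2) + 1" by (rule div_add_self2) simp
      moreover have "(v + (i + 2)) div (i + 2) \<le> k div (i + 2)"
        using vj kr unfolding r_def by (intro div_le_mono) simp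
      ultimately have qk: "q < k div (i + 2)" unfolding q_def by simp
      have sq: "sl_d M k q = d q" unfolding sl_d_def ik mk dm A_def using assms qk qv vj by auto
      have "tp i (sl_d M k) v = tp i d v" by (simp only: tp_def q_def[symmetric] sq)
      thus ?thesis unfolding tb_def v_def by simp
    qed
    finally show ?thesis .
  qed
  moreover have "n \<ge> N" using kr unfolding n_def r_def by simp
  ultimately show ?thesis by blast
qed

lemma windows_const:
  "\<exists>n\<ge>N. \<forall>z. \<bar>z\<bar> \<le> int j \<longrightarrow> sb M (z + int n) = False"
proof -
  define k where "k = 2 * j + N"
  define n where "n = k * k + j"
  have "sb M (z + int n) = False" if z: "\<bar>z\<bar> \<le> int j" for z
  proof -
    have "int (k * k) \<le> z + int n" "z + int n \<le> int (k * k + 2 * k)"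
      using z unfolding n_def k_def by auto
    hence "sb M (z + int n) = tb (sl_i k) (sl_d M k) (z + int n - int (k * k) - int k)"
      by (rule sb_slot)
    moreover have "z + int n - int (k * k) - int k < 1" using z unfolding n_def k_def by simp
    ultimately show ?thesis by (simp add: tb_def)
  qed
  moreover have "n \<ge> N"
  proof -
    have "k \<le> k * k" by (cases k) auto
    moreover have "N \<le> k" unfolding k_def by simp
    ultimately show ?thesis unfolding n_def by linarith
  qed
  ultimately show ?thesis by blast
qed


lemma sqrt_bounds: "floor_sqrt n * floor_sqrt n \<le> n" "n \<le> floor_sqrt n * floor_sqrt n + 2 * floor_sqrt n"
proof -
  show "floor_sqrt n * floor_sqrt n \<le> n" using floor_sqrt_power2_le[of n] by (simp add: power2_eq_square)
  have "n < Suc (floor_sqrt n) * Suc (floor_sqrt n)"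
    using Suc_floor_sqrt_power2_gt[of n] by (simp add: power2_eq_square)
  thus "n \<le> floor_sqrt n * floor_sqrt n + 2 * floor_sqrt n" by simp
qed

lemma run_struct:
  assumes "\<not> sb M z0" "sb M (z0 + 1)"
  shows "\<exists>i. M i \<and> (\<forall>p\<le>i. sb M (z0 + 1 + int p)) \<and> \<not> sb M (z0 + int i + 2)"
proof -
  have z1: "z0 + 1 \<ge> 0" using assms(2) unfolding sb_def by simp
  define n1 where "n1 = nat (z0 + 1)"
  have n1: "int n1 = z0 + 1" using z1 unfolding n1_def by simp
  define k where "k = floor_sqrt n1"
  have kb: "k * k \<le> n1" "n1 \<le> k * k + 2 * k" unfolding k_def by (rule sqrt_bounds)+
  define i where "i = sl_i k"
  define d where "d = sl_d M k"
  define x where "x = z0 + 1 - int (k * k) - int k"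
  have slot: "sb M y = tb i d (y - int (k * k) - int k)"
    if "int (k * k) \<le> y" "y \<le> int (k * k + 2 * k)" for y
    unfolding i_def d_def by (rule sb_slot[OF that])
  have kbi: "int (k * k) \<le> z0 + 1" "z0 + 1 \<le> int (k * k + 2 * k)"
    using kb n1 of_nat_le_iff by metis+
  have "tb i d x" using slot[OF kbi] assms(2) unfolding x_def by simp
  hence x1: "x \<ge> 1" and tpv: "tp i d (nat (x - 1))" unfolding tb_def by auto
  define v where "v = nat (x - 1)"
  define q where "q = v div (i + 2)"
  define r where "r = v mod (i + 2)"
  have dq: "d q" and rl: "r < i + 1" using tpv unfolding tp_def q_def r_def v_def by auto
  have Mi: "M i" and qk: "q < k div (i + 2)" using dq unfolding d_def sl_d_def i_def by auto
  have vqr: "v = q * (i + 2) + r" unfolding q_def r_def by (simp only: div_mult_mod_eq)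
  have r0: "r = 0"
  proof (rule ccontr)
    assume "r \<noteq> 0"
    have "int (k * k) \<le> z0" "z0 \<le> int (k * k + 2 * k)" using kbi x1 unfolding x_def by linarith+
    hence "sb M z0 = tb i d (x - 1)" using slot[of z0] unfolding x_def by (simp add: algebra_simps)
    moreover have "tb i d (x - 1)"
    proof -
      have "x - 1 \<ge> 1" using `r \<noteq> 0` vqr x1 unfolding v_def by linarith
      moreover have "nat (x - 1 - 1) = q * (i + 2) + (r - 1)" using `r \<noteq> 0` vqr x1 unfolding v_def by linarith
      moreover have "r - 1 < i + 2" using rl by simp
      ultimately show ?thesis using divmod_lin[of "r - 1" "i + 2" q] dq rl
        unfolding tb_def tp_def by simp
    qed
    ultimately show False using assms(1) by simp
  qed
  have bound: "x + int i + 1 \<le> int k"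
  proof -
    have "(q + 1) * (i + 2) \<le> (k div (i + 2)) * (i + 2)" using qk by (intro mult_le_mono1) simp
    also have "\<dots> \<le> k" by (rule div_times_less_eq_dividend)
    finally have "(q + 1) * (i + 2) \<le> k" .
    hence le: "int ((q + 1) * (i + 2)) \<le> int k" by (simp only: of_nat_le_iff)
    have "x = int (q * (i + 2)) + 1" using vqr r0 x1 unfolding v_def by linarith
    hence "x + int i + 1 = int ((q + 1) * (i + 2))" by (simp add: algebra_simps)
    thus ?thesis using le by linarith
  qed
  have inslot: "sb M (z0 + 1 + int p) = tb i d (x + int p)" if "p \<le> i + 1" for p
  proof -
    have "int (k * k) \<le> z0 + 1 + int p" "z0 + 1 + int p \<le> int (k * k + 2 * k)"
      using kbi x1 bound that unfolding x_def by linarith+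
    thus ?thesis using slot[of "z0 + 1 + int p"] unfolding x_def by (simp add: algebra_simps)
  qed
  have tbx: "tb i d (x + int p) = (p < i + 1)" if "p \<le> i + 1" for p
  proof -
    have "nat (x + int p - 1) = q * (i + 2) + p" using vqr r0 x1 unfolding v_def by linarith
    moreover have "p < i + 2" using that by simp
    ultimately show ?thesis using divmod_lin[of p "i + 2" q] dq x1 unfolding tb_def tp_def by simp
  qed
  have "\<forall>p\<le>i. sb M (z0 + 1 + int p)" using inslot tbx by simp
  moreover have "\<not> sb M (z0 + int i + 2)"
    using inslot[of "i + 1"] tbx[of "i + 1"] by (simp add: algebra_simps)
  ultimately show ?thesis using Mi by blast
qed

lemma aperiodic:
  "\<not> (\<exists>P>0. \<forall>p. tb i (\<lambda>q. q = 0) (int p + int P) = tb i (\<lambda>q. q = 0) (int p))"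
proof
  assume "\<exists>P>0. \<forall>p. tb i (\<lambda>q. q = 0) (int p + int P) = tb i (\<lambda>q. q = 0) (int p)"
  then obtain P where P: "P > 0" "\<forall>p. tb i (\<lambda>q. q = 0) (int p + int P) = tb i (\<lambda>q. q = 0) (int p)"
    by blast
  have "tb i (\<lambda>q. q = 0) (int (1 + l * P))" for l
  proof (induction l)
    case 0 thus ?case using tb_marker(2)[of "\<lambda>q. q = 0" 1 i] by simp
  next
    case (Suc l)
    have "int (1 + Suc l * P) = int (1 + l * P) + int P" by simp
    thus ?case using P(2) Suc by metis
  qed
  from this[of "i + 2"] have "tb i (\<lambda>q. q = 0) (1 + int (P * (i + 2)))" by (simp add: algebra_simps)
  thus False using tb_block[of i "\<lambda>q. q = 0" P] P(1) by simp
qed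



lemma uncountable_nat_bool: "uncountable (UNIV :: (nat \<Rightarrow> bool) set)"
proof
  assume "countable (UNIV :: (nat \<Rightarrow> bool) set)"
  then obtain f :: "nat \<Rightarrow> (nat \<Rightarrow> bool)" where f: "range f = UNIV"
    using uncountable_def by blast
  obtain k where "f k = (\<lambda>n. \<not> f n n)" using f by (metis UNIV_I imageE)
  hence "f k k = (\<not> f k k)" by metis
  thus False by simp
qed

definition Mc :: "(nat \<Rightarrow> bool) \<Rightarrow> nat \<Rightarrow> bool" where
  "Mc c i \<longleftrightarrow> (c (i div 2) \<longleftrightarrow> odd i)"

lemma Mc_sep:
  assumes "c \<noteq> c'"
  shows "\<exists>i. Mc c i \<and> \<not> Mc c' i"
proof -
  obtain q where q: "c q \<noteq> c' q" using assms by blast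
  define i where "i = 2 * q + (if c q then 1 else 0)"
  have "i div 2 = q" "odd i = c q" unfolding i_def by auto
  thus ?thesis using q unfolding Mc_def by (intro exI[of _ i]) simp
qed

definition de :: "(nat \<Rightarrow> bool) \<Rightarrow> nat \<Rightarrow> bool" where
  "de e q = (if q = 0 then True else e (q - 1))"

lemma forward:
  fixes X :: "'a set" and G :: "'b set" and \<phi> :: "'b \<Rightarrow> 'b"
  assumes phi: "\<phi> \<in> G \<rightarrow> G" and cG: "countable G" and th: "\<theta> \<in> G"
    and nqp: "\<not> quasi_periodic \<phi> \<theta>" and ab: "a \<in> X" "b \<in> X" "a \<noteq> b"
  shows "omega_u_u_chaotic (prod_space X G) (gen_shift G \<phi>)"
proof -
  have inj: "inj (\<lambda>n. (\<phi> ^^ n) \<theta>)" by (rule orbit_inj[OF nqp])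
  define L where "L B = (if B then b else a)" for B
  have LX: "L B \<in> X" for B unfolding L_def using ab by simp
  have Linj: "L B = L B' \<longleftrightarrow> B = B'" for B B' unfolding L_def using ab(3) by auto
  define Om where "Om y = omega_limit (prod_space X G) (gen_shift G \<phi>) y" for y
  define xs where "xs c = Emb G \<phi> \<theta> a (\<lambda>z. L (sb (Mc c) z))" for c
  define pat where "pat i e = Emb G \<phi> \<theta> a (\<lambda>z. L (tb i e z))" for i e
  define pat0 where "pat0 = Emb G \<phi> \<theta> a (\<lambda>z. L False)"
  have xs_top: "xs c \<in> topspace (prod_space X G)" for c
    unfolding xs_def by (rule Emb_top[OF ab(1) LX])
  have F2: "pat i e \<in> Om (xs c)" if Mi: "Mc c i" for c i e
    unfolding pat_def Om_def xs_def
  proof (rule Emb_lower[OF inj phi cG ab(1) LX LX])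
    fix j N
    obtain n where "n \<ge> N" "\<forall>z. \<bar>z\<bar> \<le> int j \<longrightarrow> sb (Mc c) (z + int n) = tb i e z"
      using windows_pattern[where M="Mc c" and i=i, OF Mi] by blast
    thus "\<exists>n\<ge>N. \<forall>z. \<bar>z\<bar> \<le> int j \<longrightarrow> L (sb (Mc c) (z + int n)) = L (tb i e z)" by auto
  qed
  have F3: "pat0 \<in> Om (xs c)" for c
    unfolding pat0_def Om_def xs_def
  proof (rule Emb_lower[OF inj phi cG ab(1) LX LX])
    fix j N
    obtain n where "n \<ge> N" "\<forall>z. \<bar>z\<bar> \<le> int j \<longrightarrow> sb (Mc c) (z + int n) = False"
      using windows_const by blast
    thus "\<exists>n\<ge>N. \<forall>z. \<bar>z\<bar> \<le> int j \<longrightarrow> L (sb (Mc c) (z + int n)) = L False" by auto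
  qed
  have F4: "pat i e \<notin> Om (xs c')" if nM: "\<not> Mc c' i" and e0: "e 0" for c' i e
  proof
    assume "pat i e \<in> Om (xs c')"
    then obtain n where n: "\<forall>p<i + 3. L (sb (Mc c') (int p + int n)) = L (tb i e (int p))"
      using Emb_upper[where s="\<lambda>z. L (sb (Mc c') z)" and t="\<lambda>z. L (tb i e z)" and N=0 and L="i + 3",
          OF inj phi th ab(1) LX]
      unfolding pat_def Om_def xs_def by blast
    have S: "sb (Mc c') (int n + int p) = tb i e (int p)" if "p < i + 3" for p
    proof -
      have "sb (Mc c') (int p + int n) = tb i e (int p)" using n that Linj by simp
      thus ?thesis by (simp only: add.commute)
    qed
    have s0: "\<not> sb (Mc c') (int n)" using S[of 0] tb_marker(1)[where d=e, OF e0] by simp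
    have s1: "sb (Mc c') (int n + 1)" using S[of 1] tb_marker(2)[where d=e, OF e0, of 1] by simp
    obtain i' where i': "Mc c' i'" "\<forall>p\<le>i'. sb (Mc c') (int n + 1 + int p)"
      "\<not> sb (Mc c') (int n + int i' + 2)"
      using run_struct[OF s0 s1] by blast
    have "i' = i"
    proof (rule ccontr)
      assume "i' \<noteq> i"
      hence "i' < i \<or> i < i'" by linarith
      thus False
      proof
        assume "i' < i"
        have "sb (Mc c') (int n + int (i' + 2)) = tb i e (int (i' + 2))" using S[of "i' + 2"] `i' < i` by simp
        moreover have "tb i e (int (i' + 2))" using tb_marker(2)[where d=e, OF e0, of "i' + 2"] `i' < i` by simp
        ultimately show False using i'(3) by (simp add: algebra_simps)
      next
        assume "i < i'"
        have "i + 1 \<le> i'" using `i < i'` by simp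
        hence "sb (Mc c') (int n + 1 + int (i + 1))" using i'(2) by blast
        moreover have "sb (Mc c') (int n + int (i + 2)) = tb i e (int (i + 2))" using S[of "i + 2"] by simp
        moreover have "\<not> tb i e (int (i + 2))" using tb_marker(3)[where d=e, OF e0, of i] by (simp add: add.commute)
        ultimately show False by (simp add: algebra_simps)
      qed
    qed
    thus False using i'(1) nM by simp
  qed
  have F5: "pat i (\<lambda>q. q = 0) \<notin> periodic_points (prod_space X G) (gen_shift G \<phi>)" for i
  proof
    assume per: "pat i (\<lambda>q. q = 0) \<in> periodic_points (prod_space X G) (gen_shift G \<phi>)"
    have "\<exists>P>0. \<forall>p. L (tb i (\<lambda>q. q = 0) (int p + int P)) = L (tb i (\<lambda>q. q = 0) (int p))"
      by (rule Emb_periodic[OF inj phi th per[unfolded pat_def]])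
    then obtain P where P: "P > 0"
      "\<And>p. L (tb i (\<lambda>q. q = 0) (int p + int P)) = L (tb i (\<lambda>q. q = 0) (int p))"
      by blast
    have "\<forall>p. tb i (\<lambda>q. q = 0) (int p + int P) = tb i (\<lambda>q. q = 0) (int p)"
      using P(2) unfolding Linj by blast
    thus False using aperiodic P(1) by blast
  qed
  have F6: "inj (\<lambda>e. pat i (de e))" for i
  proof (rule injI)
    fix e e' assume eq: "pat i (de e) = pat i (de e')"
    show "e = e'"
    proof
      fix q
      define p where "p = 1 + Suc q * (i + 2)"
      have G: "(\<phi> ^^ p) \<theta> \<in> G" using funpow_in[OF phi th] .
      have "pat i (de e) ((\<phi> ^^ p) \<theta>) = pat i (de e') ((\<phi> ^^ p) \<theta>)" using eq by simp
      hence "tb i (de e) (int p) = tb i (de e') (int p)"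
        unfolding pat_def Emb_at[OF G] using inB_orbit[OF inj] Linj by simp
      moreover have "int p = 1 + int (Suc q * (i + 2))" unfolding p_def by simp
      ultimately have "de e (Suc q) = de e' (Suc q)"
        using tb_block[of i "de e" "Suc q"] tb_block[of i "de e'" "Suc q"] by simp
      thus "e q = e' q" unfolding de_def by simp
    qed
  qed
  have scr: "omega_u_scrambled (prod_space X G) (gen_shift G \<phi>) (xs c) (xs c')
       \<and> xs c \<noteq> xs c'" if cc: "c \<noteq> c'" for c c'
  proof -
    obtain i where i: "Mc c i" "\<not> Mc c' i" using Mc_sep[OF cc] by blast
    have sub: "range (\<lambda>e. pat i (de e)) \<subseteq> Om (xs c) - Om (xs c')"
      using F2[OF i(1)] F4[OF i(2)] by (auto simp: de_def)
    have "uncountable (range (\<lambda>e. pat i (de e)))"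
    proof
      assume "countable (range (\<lambda>e. pat i (de e)))"
      hence "countable (UNIV :: (nat \<Rightarrow> bool) set)"
        using countable_image_inj_on F6[of i] by blast
      thus False using uncountable_nat_bool by blast
    qed
    hence unc: "uncountable (Om (xs c) - Om (xs c'))" using sub countable_subset by blast
    have "pat0 \<in> Om (xs c) \<inter> Om (xs c')" using F3 by blast
    moreover have "pat i (\<lambda>q. q = 0) \<in> Om (xs c) - periodic_points (prod_space X G) (gen_shift G \<phi>)"
      using F2[OF i(1)] F5 by blast
    moreover have "xs c \<noteq> xs c'"
    proof
      assume "xs c = xs c'"
      hence "Om (xs c) - Om (xs c') = {}" by simp
      thus False using unc by (metis countable_empty)
    qed
    ultimately show ?thesis using unc unfolding omega_u_scrambled_def Om_def by blast
  qed
  have injxs: "inj xs"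
  proof (rule injI)
    fix c c' assume "xs c = xs c'"
    thus "c = c'" using scr[of c c'] by blast
  qed
  have "scrambled_set (omega_u_scrambled (prod_space X G) (gen_shift G \<phi>)) (prod_space X G) (range xs)"
    unfolding scrambled_set_def
  proof (intro conjI)
    show "range xs \<subseteq> topspace (prod_space X G)" using xs_top by blast
    have "(\<lambda>_. True) \<noteq> (\<lambda>_::nat. False)" by (auto simp: fun_eq_iff)
    hence "xs (\<lambda>_. True) \<noteq> xs (\<lambda>_. False)" using scr by blast
    thus "\<exists>x\<in>range xs. \<exists>y\<in>range xs. x \<noteq> y" by blast
    show "\<forall>x\<in>range xs. \<forall>y\<in>range xs. x \<noteq> y \<longrightarrow> omega_u_scrambled (prod_space X G) (gen_shift G \<phi>) x y"
    proof (intro ballI impI)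
      fix x y assume "x \<in> range xs" "y \<in> range xs" "x \<noteq> y"
      then obtain c c' where "x = xs c" "y = xs c'" by blast
      hence "c \<noteq> c'" using `x \<noteq> y` by blast
      thus "omega_u_scrambled (prod_space X G) (gen_shift G \<phi>) x y" using scr `x = xs c` `y = xs c'` by blast
    qed
  qed
  moreover have "uncountable (range xs)"
  proof
    assume "countable (range xs)"
    hence "countable (UNIV :: (nat \<Rightarrow> bool) set)" using countable_image_inj_on injxs by blast
    thus False using uncountable_nat_bool by blast
  qed
  ultimately show ?thesis unfolding omega_u_u_chaotic_def by blast
qed



lemma scrambled_mono:
  assumes "\<And>x y. P x y \<Longrightarrow> Q x y" "scrambled_set P T S"
  shows "scrambled_set Q T S"
  using assms unfolding scrambled_set_def by blast

lemma u_imp_inf: "omega_u_scrambled T f x y \<Longrightarrow> omega_inf_scrambled T f x y"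
proof -
  assume H: "omega_u_scrambled T f x y"
  hence "uncountable (omega_limit T f x - omega_limit T f y)" unfolding omega_u_scrambled_def by blast
  hence "infinite (omega_limit T f x - omega_limit T f y)" by (rule uncountable_infinite)
  thus ?thesis using H unfolding omega_u_scrambled_def omega_inf_scrambled_def by blast
qed

lemma backward:
  fixes X :: "'a set" and G :: "'b set" and \<phi> :: "'b \<Rightarrow> 'b"
  assumes phi: "\<phi> \<in> G \<rightarrow> G" and cG: "countable G"
    and ch: "omega_inf_2_chaotic (prod_space X G) (gen_shift G \<phi>)"
  shows "\<exists>\<theta>\<in>G. \<not> quasi_periodic \<phi> \<theta>"
proof (rule ccontr)
  assume "\<not> (\<exists>\<theta>\<in>G. \<not> quasi_periodic \<phi> \<theta>)"
  hence qp: "\<forall>\<alpha>\<in>G. quasi_periodic \<phi> \<alpha>" by blast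
  obtain S where S: "scrambled_set (omega_inf_scrambled (prod_space X G) (gen_shift G \<phi>)) (prod_space X G) S"
    using ch unfolding omega_inf_2_chaotic_def by blast
  then obtain x y where xy: "x \<in> S" "y \<in> S" "x \<noteq> y" unfolding scrambled_set_def by blast
  have top: "x \<in> topspace (prod_space X G)" "y \<in> topspace (prod_space X G)"
    using S xy unfolding scrambled_set_def by blast+
  have sc: "omega_inf_scrambled (prod_space X G) (gen_shift G \<phi>) x y"
    using S xy unfolding scrambled_set_def by blast
  then obtain z where zx: "z \<in> omega_limit (prod_space X G) (gen_shift G \<phi>) x"
      and zy: "z \<in> omega_limit (prod_space X G) (gen_shift G \<phi>) y"
    unfolding omega_inf_scrambled_def by blast
  have "omega_limit (prod_space X G) (gen_shift G \<phi>) x \<subseteq> omega_limit (prod_space X G) (gen_shift G \<phi>) y"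
    using omega_absorb[OF phi qp cG top zx zy] by blast
  hence "omega_limit (prod_space X G) (gen_shift G \<phi>) x - omega_limit (prod_space X G) (gen_shift G \<phi>) y = {}"
    by blast
  thus False using sc unfolding omega_inf_scrambled_def by (metis finite.emptyI)
qed

theorem theorem3p7:
  fixes X :: "'a set" and G :: "'b set" and \<phi> :: "'b \<Rightarrow> 'b"
  assumes "finite X" and "card X \<ge> 2"
    and "countable G" and "G \<noteq> {}"
    and "\<phi> \<in> G \<rightarrow> G"
  defines "T \<equiv> prod_space X G" and "\<sigma> \<equiv> gen_shift G \<phi>"
  shows "((\<exists>\<theta>\<in>G. \<not> quasi_periodic \<phi> \<theta>) \<longleftrightarrow> omega_u_u_chaotic T \<sigma>) \<and>
         ((\<exists>\<theta>\<in>G. \<not> quasi_periodic \<phi> \<theta>) \<longleftrightarrow> omega_u_inf_chaotic T \<sigma>) \<and>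
         ((\<exists>\<theta>\<in>G. \<not> quasi_periodic \<phi> \<theta>) \<longleftrightarrow> omega_u_2_chaotic T \<sigma>) \<and>
         ((\<exists>\<theta>\<in>G. \<not> quasi_periodic \<phi> \<theta>) \<longleftrightarrow> omega_inf_inf_chaotic T \<sigma>) \<and>
         ((\<exists>\<theta>\<in>G. \<not> quasi_periodic \<phi> \<theta>) \<longleftrightarrow> omega_inf_2_chaotic T \<sigma>)"
proof -
  have "X \<noteq> {}" using assms(2) by auto
  then obtain a where a: "a \<in> X" by blast
  have "card (X - {a}) \<ge> 1" using assms(1,2) a by (simp add: card_Diff_singleton)
  hence "X - {a} \<noteq> {}" by (metis card.empty not_one_le_zero)
  then obtain b where b: "b \<in> X" "a \<noteq> b" by blast
  let ?Q = "\<exists>\<theta>\<in>G. \<not> quasi_periodic \<phi> \<theta>"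
  have fw: "omega_u_u_chaotic T \<sigma>" if "?Q"
  proof -
    from that obtain \<theta> where "\<theta> \<in> G" "\<not> quasi_periodic \<phi> \<theta>" by blast
    thus ?thesis unfolding T_def \<sigma>_def by (rule forward[OF assms(5,3) _ _ a b])
  qed
  have bw: "?Q" if "omega_inf_2_chaotic T \<sigma>"
    using backward[OF assms(5,3)] that unfolding T_def \<sigma>_def by blast
  have i1: "omega_u_inf_chaotic T \<sigma>" if H: "omega_u_u_chaotic T \<sigma>"
  proof -
    obtain S where "scrambled_set (omega_u_scrambled T \<sigma>) T S" "uncountable S"
      using H unfolding omega_u_u_chaotic_def by blast
    moreover hence "infinite S" by (simp add: uncountable_infinite)
    ultimately show ?thesis unfolding omega_u_inf_chaotic_def by blast
  qed
  have i2: "omega_u_2_chaotic T \<sigma>" if "omega_u_inf_chaotic T \<sigma>"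
    using that unfolding omega_u_2_chaotic_def omega_u_inf_chaotic_def by blast
  have i3: "omega_inf_2_chaotic T \<sigma>" if H: "omega_u_2_chaotic T \<sigma>"
  proof -
    obtain S where S: "scrambled_set (omega_u_scrambled T \<sigma>) T S"
      using H unfolding omega_u_2_chaotic_def by blast
    have "scrambled_set (omega_inf_scrambled T \<sigma>) T S"
      by (rule scrambled_mono[OF _ S]) (rule u_imp_inf)
    thus ?thesis unfolding omega_inf_2_chaotic_def by blast
  qed
  have i4: "omega_inf_inf_chaotic T \<sigma>" if H: "omega_u_inf_chaotic T \<sigma>"
  proof -
    obtain S where S: "scrambled_set (omega_u_scrambled T \<sigma>) T S" "infinite S"
      using H unfolding omega_u_inf_chaotic_def by blast
    have "scrambled_set (omega_inf_scrambled T \<sigma>) T S"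
      by (rule scrambled_mono[OF _ S(1)]) (rule u_imp_inf)
    thus ?thesis using S(2) unfolding omega_inf_inf_chaotic_def by blast
  qed
  have i5: "omega_inf_2_chaotic T \<sigma>" if "omega_inf_inf_chaotic T \<sigma>"
    using that unfolding omega_inf_2_chaotic_def omega_inf_inf_chaotic_def by blast
  show ?thesis
  proof (intro conjI iffI)
    show "omega_u_u_chaotic T \<sigma>" if ?Q using fw that .
    show "omega_u_inf_chaotic T \<sigma>" if ?Q using i1 fw that by blast
    show "omega_u_2_chaotic T \<sigma>" if ?Q using i2 i1 fw that by blast
    show "omega_inf_inf_chaotic T \<sigma>" if ?Q using i4 i1 fw that by blast
    show "omega_inf_2_chaotic T \<sigma>" if ?Q using i3 i2 i1 fw that by blast
    show ?Q if "omega_u_u_chaotic T \<sigma>" using bw i3 i2 i1 that by blast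
    show ?Q if "omega_u_inf_chaotic T \<sigma>" using bw i3 i2 that by blast
    show ?Q if "omega_u_2_chaotic T \<sigma>" using bw i3 that by blast
    show ?Q if "omega_inf_inf_chaotic T \<sigma>" using bw i5 that by blast
    show ?Q if "omega_inf_2_chaotic T \<sigma>" using bw that by blast
  qed
qed


end
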